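(* In the setting below, the measure $\mu_P^{(0)}$ is independent of the choice of the disintegrations $\gamma_p^\bullet$ and $\gamma_q^\bullet$: if $\widetilde{\gamma}_p^\bullet,\widetilde{\gamma}_q^\bullet$ is another such pair and $\widetilde{\mu}_P^{(0)}$ the corresponding measure, then $\widetilde{\mu}_P^{(0)}=\mu_P^{(0)}$.
   Context: Setting: $(S,\lambda_S^\bullet,\mu_S^{(0)})$, $(G,\lambda_G^\bullet,\mu_G^{(0)})$, $(T,\lambda_T^\bullet,\mu_T^{(0)})$ are Haar groupoids, i.e. second countable, locally compact, Hausdorff topological groupoids with continuous left Haar systems (systems of measures $\lambda^u$ concentrated on $r^{-1}(u)$, continuous in $u$ against continuous compactly supported $f\ge0$, left invariant $\lambda^{d(x)}(E)=\lambda^{r(x)}(x(E\cap r^{-1}(d(x))))$, positive on open sets meeting $r^{-1}(u)$) and non-zero quasi-invariant Radon measures $\mu^{(0)}$ on the unit spaces (the induced measure $\mu(E)=\int\lambda^u(E)d\mu^{(0)}(u)$ is equivalent to $E\mapsto\mu(E^{-1})$). $p:S\to G$, $q:T\to G$ are homomorphisms of Haar groupoids (continuous homomorphisms preserving the class of the induced measures). $\mu_G$ is the induced measure of $G$. $P^{(0)}=\{(s,g,t)\in S^{(0)}\times G\times T^{(0)}: r_G(g)=p(s),\ d_G(g)=q(t)\}$. A Borel system of measures (BSM) on a Borel map $\pi:X\to Y$ is a family $\{\gamma^y\}$ of positive Borel measures on $X$, $\gamma^y$ concentrated on $\pi^{-1}(y)$, $y\mapsto\gamma^y(E)$ Borel;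 locally finite (resp. locally bounded) if every point has a neighborhood $U$ with $\gamma^y(U)<\infty$ for all $y$ (resp. $\gamma^y(U)<C$ for all $y$, some constant $C$); a disintegration of $\mu$ w.r.t. $\nu$ if $\mu(E)=\int\gamma^y(E)d\nu(y)$. An admissible pair consists of a locally finite, locally bounded BSM $\gamma_p^\bullet$ on $p|_{S^{(0)}}:S^{(0)}\to G^{(0)}$ disintegrating $\mu_S^{(0)}$ w.r.t. $\mu_G^{(0)}$ and a locally finite, locally bounded BSM $\gamma_q^\bullet$ on $q|_{T^{(0)}}:T^{(0)}\to G^{(0)}$ disintegrating $\mu_T^{(0)}$ w.r.t. $\mu_G^{(0)}$. For such a pair, $\eta^x=\gamma_p^{r_G(x)}\times\delta_x\times\gamma_q^{d_G(x)}$ ($x\in G$) as a measure on $P^{(0)}$, and $\mu_P^{(0)}(B)=\int_G\eta^x(B)\,d\mu_G(x)$ for Borel $B\subseteq P^{(0)}$. *)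

theory Defs
  imports "HOL-Analysis.Analysis" "HOL-Probability.Probability"
begin

text \<open>A groupoid is encoded on a whole type 'g: range map r, source (domain) map d,
  partial multiplication m (x,y composable iff d x = r y), inverse i.\<close>

definition groupoid :: "('g \<Rightarrow> 'g) \<Rightarrow> ('g \<Rightarrow> 'g) \<Rightarrow> ('g \<Rightarrow> 'g \<Rightarrow> 'g) \<Rightarrow> ('g \<Rightarrow> 'g) \<Rightarrow> bool" where
  "groupoid r d m i \<longleftrightarrow>
     (\<forall>x. r (r x) = r x \<and> d (r x) = r x \<and> r (d x) = d x \<and> d (d x) = d x) \<and>
     (\<forall>x y. d x = r y \<longrightarrow> r (m x y) = r x \<and> d (m x y) = d y) \<and>
     (\<forall>x y z. d x = r y \<and> d y = r z \<longrightarrow> m (m x y) z = m x (m y z)) \<and>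
     (\<forall>x. m (r x) x = x \<and> m x (d x) = x) \<and>
     (\<forall>x. r (i x) = d x \<and> d (i x) = r x \<and> m x (i x) = r x \<and> m (i x) x = d x)"

definition gunits :: "('g \<Rightarrow> 'g) \<Rightarrow> 'g set" where
  "gunits r = range r"

definition topological_groupoid ::
  "('g::{t2_space,second_countable_topology} \<Rightarrow> 'g) \<Rightarrow> ('g \<Rightarrow> 'g) \<Rightarrow> ('g \<Rightarrow> 'g \<Rightarrow> 'g) \<Rightarrow> ('g \<Rightarrow> 'g) \<Rightarrow> bool" where
  "topological_groupoid r d m i \<longleftrightarrow> groupoid r d m i \<and>
     locally_compact_space (euclidean :: 'g topology) \<and>
     continuous_on UNIV r \<and> continuous_on UNIV d \<and> continuous_on UNIV i \<and>
     continuous_on {(x, y). d x = r y} (\<lambda>(x, y). m x y)"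

definition haar_system ::
  "('g::{t2_space,second_countable_topology} \<Rightarrow> 'g) \<Rightarrow> ('g \<Rightarrow> 'g) \<Rightarrow> ('g \<Rightarrow> 'g \<Rightarrow> 'g) \<Rightarrow> ('g \<Rightarrow> 'g measure) \<Rightarrow> bool" where
  "haar_system r d m lam \<longleftrightarrow>
     (\<forall>u\<in>gunits r. sets (lam u) = sets borel \<and>
        emeasure (lam u) (UNIV - r -` {u}) = 0 \<and>
        (\<forall>K. compact K \<longrightarrow> emeasure (lam u) K < \<infinity>) \<and>
        (\<forall>V. open V \<and> V \<inter> r -` {u} \<noteq> {} \<longrightarrow> emeasure (lam u) V > 0)) \<and>
     (\<forall>f :: 'g \<Rightarrow> real. continuous_on UNIV f \<and> compact (closure {x. f x \<noteq> 0}) \<and> (\<forall>x. f x \<ge> 0)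
        \<longrightarrow> continuous_on (gunits r) (\<lambda>u. integral\<^sup>L (lam u) f)) \<and>
     (\<forall>x. \<forall>E\<in>sets borel. emeasure (lam (d x)) E = emeasure (lam (r x)) (m x ` (E \<inter> r -` {d x})))"

definition induced_measure :: "('g::topological_space \<Rightarrow> 'g measure) \<Rightarrow> 'g measure \<Rightarrow> 'g measure" where
  "induced_measure lam mu0 = measure_of UNIV (sets borel) (\<lambda>E. \<integral>\<^sup>+ u. emeasure (lam u) E \<partial>mu0)"

text \<open>Non-zero quasi-invariant Radon measure on the unit space (a Borel measure on 'g
  concentrated on G^(0)).\<close>
definition quasi_invariant ::
  "('g::{t2_space,second_countable_topology} \<Rightarrow> 'g) \<Rightarrow> ('g \<Rightarrow> 'g) \<Rightarrow> ('g \<Rightarrow> 'g measure) \<Rightarrow> 'g measure \<Rightarrow> bool" where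
  "quasi_invariant r i lam mu0 \<longleftrightarrow>
     sets mu0 = sets borel \<and> emeasure mu0 (UNIV - gunits r) = 0 \<and>
     (\<forall>K. compact K \<longrightarrow> emeasure mu0 K < \<infinity>) \<and> emeasure mu0 UNIV \<noteq> 0 \<and>
     (\<forall>E\<in>sets borel. emeasure (induced_measure lam mu0) E = 0 \<longleftrightarrow>
                      emeasure (induced_measure lam mu0) (i -` E) = 0)"

definition haar_groupoid ::
  "('g::{t2_space,second_countable_topology} \<Rightarrow> 'g) \<Rightarrow> ('g \<Rightarrow> 'g) \<Rightarrow> ('g \<Rightarrow> 'g \<Rightarrow> 'g) \<Rightarrow> ('g \<Rightarrow> 'g)
     \<Rightarrow> ('g \<Rightarrow> 'g measure) \<Rightarrow> 'g measure \<Rightarrow> bool" where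
  "haar_groupoid r d m i lam mu0 \<longleftrightarrow>
     topological_groupoid r d m i \<and> haar_system r d m lam \<and> quasi_invariant r i lam mu0"

text \<open>Homomorphism of Haar groupoids: continuous groupoid homomorphism p such that
  the image of the class of \<mu>_S is the class of \<mu>_G (E is \<mu>_G-null iff p^{-1}(E) is \<mu>_S-null).\<close>
definition haar_hom ::
  "('s::{t2_space,second_countable_topology} \<Rightarrow> 's) \<Rightarrow> ('s \<Rightarrow> 's) \<Rightarrow> ('s \<Rightarrow> 's \<Rightarrow> 's) \<Rightarrow> ('s \<Rightarrow> 's measure) \<Rightarrow> 's measure
   \<Rightarrow> ('g::{t2_space,second_countable_topology} \<Rightarrow> 'g) \<Rightarrow> ('g \<Rightarrow> 'g) \<Rightarrow> ('g \<Rightarrow> 'g \<Rightarrow> 'g) \<Rightarrow> ('g \<Rightarrow> 'g measure) \<Rightarrow> 'g measure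
   \<Rightarrow> ('s \<Rightarrow> 'g) \<Rightarrow> bool" where
  "haar_hom rS dS mS lamS muS0 rG dG mG lamG muG0 p \<longleftrightarrow>
     continuous_on UNIV p \<and>
     (\<forall>x y. dS x = rS y \<longrightarrow> dG (p x) = rG (p y) \<and> p (mS x y) = mG (p x) (p y)) \<and>
     (\<forall>E\<in>sets borel. emeasure (induced_measure lamG muG0) E = 0 \<longleftrightarrow>
                      emeasure (induced_measure lamS muS0) (p -` E) = 0)"

text \<open>Borel system of measures on the map \<pi> : X0 \<rightarrow> Y0 (measures on X0 are represented as
  Borel measures on the ambient type concentrated on X0).\<close>
definition bsm :: "'x::topological_space set \<Rightarrow> 'y::topological_space set \<Rightarrow> ('x \<Rightarrow> 'y) \<Rightarrow> ('y \<Rightarrow> 'x measure) \<Rightarrow> bool" where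
  "bsm X0 Y0 \<pi> \<gamma> \<longleftrightarrow>
     (\<forall>y\<in>Y0. sets (\<gamma> y) = sets borel \<and> emeasure (\<gamma> y) (UNIV - {x\<in>X0. \<pi> x = y}) = 0) \<and>
     (\<forall>E\<in>sets borel. (\<lambda>y. emeasure (\<gamma> y) E) \<in> borel_measurable (restrict_space borel Y0))"

definition bsm_locally_finite :: "'x::topological_space set \<Rightarrow> 'y set \<Rightarrow> ('y \<Rightarrow> 'x measure) \<Rightarrow> bool" where
  "bsm_locally_finite X0 Y0 \<gamma> \<longleftrightarrow>
     (\<forall>x\<in>X0. \<exists>U. open U \<and> x \<in> U \<and> (\<forall>y\<in>Y0. emeasure (\<gamma> y) U < \<infinity>))"

definition bsm_locally_bounded :: "'x::topological_space set \<Rightarrow> 'y set \<Rightarrow> ('y \<Rightarrow> 'x measure) \<Rightarrow> bool" where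
  "bsm_locally_bounded X0 Y0 \<gamma> \<longleftrightarrow>
     (\<forall>x\<in>X0. \<exists>U C. open U \<and> x \<in> U \<and> (\<forall>y\<in>Y0. emeasure (\<gamma> y) U < ennreal C))"

definition disintegration :: "'x::topological_space set \<Rightarrow> ('y \<Rightarrow> 'x measure) \<Rightarrow> 'x measure \<Rightarrow> 'y measure \<Rightarrow> bool" where
  "disintegration X0 \<gamma> \<mu> \<nu> \<longleftrightarrow>
     (\<forall>E\<in>sets borel. E \<subseteq> X0 \<longrightarrow> emeasure \<mu> E = (\<integral>\<^sup>+ y. emeasure (\<gamma> y) E \<partial>\<nu>))"

definition admissible_bsm ::
  "('s::topological_space \<Rightarrow> 's) \<Rightarrow> 's measure \<Rightarrow> ('g::topological_space \<Rightarrow> 'g) \<Rightarrow> 'g measure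
     \<Rightarrow> ('s \<Rightarrow> 'g) \<Rightarrow> ('g \<Rightarrow> 's measure) \<Rightarrow> bool" where
  "admissible_bsm rS muS0 rG muG0 p \<gamma> \<longleftrightarrow>
     bsm (gunits rS) (gunits rG) p \<gamma> \<and>
     bsm_locally_finite (gunits rS) (gunits rG) \<gamma> \<and>
     bsm_locally_bounded (gunits rS) (gunits rG) \<gamma> \<and>
     disintegration (gunits rS) \<gamma> muS0 muG0"

definition P0 :: "('s \<Rightarrow> 's) \<Rightarrow> ('g \<Rightarrow> 'g) \<Rightarrow> ('g \<Rightarrow> 'g) \<Rightarrow> ('t \<Rightarrow> 't) \<Rightarrow> ('s \<Rightarrow> 'g) \<Rightarrow> ('t \<Rightarrow> 'g)
    \<Rightarrow> ('s \<times> 'g \<times> 't) set" where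
  "P0 rS rG dG rT p q = {(s, g, t). s \<in> gunits rS \<and> t \<in> gunits rT \<and> rG g = p s \<and> dG g = q t}"

definition eta :: "('g::topological_space \<Rightarrow> 'g) \<Rightarrow> ('g \<Rightarrow> 'g) \<Rightarrow> ('g \<Rightarrow> 's measure) \<Rightarrow> ('g \<Rightarrow> 't measure)
    \<Rightarrow> 'g \<Rightarrow> ('s \<times> 'g \<times> 't) measure" where
  "eta rG dG \<gamma>p \<gamma>q x = \<gamma>p (rG x) \<Otimes>\<^sub>M (return borel x \<Otimes>\<^sub>M \<gamma>q (dG x))"

definition muP0 :: "('g::topological_space \<Rightarrow> 'g) \<Rightarrow> ('g \<Rightarrow> 'g) \<Rightarrow> ('g \<Rightarrow> 'g measure) \<Rightarrow> 'g measure
    \<Rightarrow> ('g \<Rightarrow> 's measure) \<Rightarrow> ('g \<Rightarrow> 't measure) \<Rightarrow> ('s \<times> 'g \<times> 't) set \<Rightarrow> ennreal" where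
  "muP0 rG dG lamG muG0 \<gamma>p \<gamma>q B = (\<integral>\<^sup>+ x. emeasure (eta rG dG \<gamma>p \<gamma>q x) B \<partial>induced_measure lamG muG0)"

end

theory Submission
  imports Defs
begin

lemma gunits_closed:
  fixes r :: "'a::t2_space \<Rightarrow> 'a"
  assumes "groupoid r d m i" "continuous_on UNIV r"
  shows "closed (gunits r)"
proof -
  have "gunits r = {x. r x = x}"
    proof
    show "gunits r \<subseteq> {x. r x = x}" using assms(1) unfolding gunits_def groupoid_def by auto
    show "{x. r x = x} \<subseteq> gunits r" unfolding gunits_def by (auto intro: range_eqI[OF sym])
  qed
  moreover have "closed {x. r x = x}"
    using closed_Collect_eq[OF assms(2) continuous_on_id] by simp
  ultimately show ?thesis by simp
qed

lemma sigma_finite_lc: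
  fixes M :: "'a::{t2_space,second_countable_topology} measure"
  assumes lc: "locally_compact_space (euclidean :: 'a topology)"
    and s: "sets M = sets borel" and fin: "\<forall>K. compact K \<longrightarrow> emeasure M K < \<infinity>"
  shows "sigma_finite_measure M"
proof
  let ?F = "{U::'a set. open U \<and> (\<exists>K. compact K \<and> U \<subseteq> K)}"
  obtain F' where F': "F' \<subseteq> ?F" "countable F'" "\<Union>F' = \<Union>?F"
    using Lindelof[of ?F] by auto
  have cov: "\<Union>?F = UNIV"
  proof safe
    fix x :: 'a
    have "\<exists>U K. open U \<and> compact K \<and> x \<in> U \<and> U \<subseteq> K"
      using lc unfolding locally_compact_space_def by simp
    then obtain U K where "open U" "compact K" "x \<in> U" "U \<subseteq> K" by blast
    then show "x \<in> \<Union>?F" by auto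
  qed auto
  define k where "k U = (SOME K. compact K \<and> U \<subseteq> K)" for U :: "'a set"
  have k: "compact (k U) \<and> U \<subseteq> k U" if "U \<in> F'" for U
  proof -
    have "\<exists>K. compact K \<and> U \<subseteq> K" using F'(1) that by auto
    then show ?thesis unfolding k_def by (rule someI_ex)
  qed
  show "\<exists>A::'a set set. countable A \<and> A \<subseteq> sets M \<and> (\<Union>A) = space M \<and> (\<forall>a\<in>A. emeasure M a \<noteq> \<infinity>)"
  proof (intro exI[of _ "k ` F'"] conjI ballI)
    show "countable (k ` F')" using F'(2) by simp
    show "k ` F' \<subseteq> sets M"
    proof
      fix a assume "a \<in> k ` F'"
      then obtain U where "U \<in> F'" "a = k U" by blast
      then have "compact a" using k by blast
      then show "a \<in> sets M" unfolding s by (intro borel_closed compact_imp_closed)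
    qed
    have "space M = UNIV" using sets_eq_imp_space_eq[OF s] by simp
    moreover have "\<Union>(k ` F') = UNIV"
    proof -
      have "\<Union>F' \<subseteq> \<Union>(k ` F')" using k by blast
      then show ?thesis using F'(3) cov by auto
    qed
    ultimately show "\<Union>(k ` F') = space M" by simp
    fix a assume "a \<in> k ` F'"
    then obtain U where "U \<in> F'" "a = k U" by blast
    then have "compact a" using k by blast
    then show "emeasure M a \<noteq> \<infinity>" using fin by auto
  qed
qed

lemma fib_restrict:
  fixes p :: "'x::topological_space \<Rightarrow> 'y::t2_space"
  assumes b: "bsm X0 Y0 p \<gamma>" and y: "y \<in> Y0" and X0: "closed X0" and pc: "continuous_on UNIV p"
    and E: "E \<in> sets borel" and F: "F \<in> sets borel"
  shows "emeasure (\<gamma> y) (E \<inter> X0 \<inter> p -` F) = emeasure (\<gamma> y) E * indicator F y"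
proof -
  have s: "sets (\<gamma> y) = sets borel" and z: "emeasure (\<gamma> y) (UNIV - {x\<in>X0. p x = y}) = 0"
    using b y unfolding bsm_def by auto
  have fibeq: "{x\<in>X0. p x = y} = X0 \<inter> p -` {y}" by auto
  have "closed (X0 \<inter> p -` {y})" by (intro closed_Int X0 closed_vimage pc closed_singleton)
  then have fibB: "UNIV - {x\<in>X0. p x = y} \<in> sets (\<gamma> y)" unfolding s fibeq by auto
  have pm: "p \<in> borel_measurable borel" by (rule borel_measurable_continuous_onI[OF pc])
  have pF: "p -` F \<in> sets borel" using measurable_sets[OF pm F] by simp
  have X0B: "X0 \<in> sets borel" using X0 by auto
  have EB: "E \<inter> X0 \<inter> p -` F \<in> sets (\<gamma> y)" using E X0B pF unfolding s by auto
  show ?thesis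
  proof (cases "y \<in> F")
    case True
    have "AE x in \<gamma> y. x \<in> {x\<in>X0. p x = y}"
      by (rule AE_I'[where N="UNIV - {x\<in>X0. p x = y}"]) (use fibB z in auto)
    then have "AE x in \<gamma> y. x \<in> E \<inter> X0 \<inter> p -` F \<longleftrightarrow> x \<in> E"
      by eventually_elim (use True in auto)
    then have "emeasure (\<gamma> y) (E \<inter> X0 \<inter> p -` F) = emeasure (\<gamma> y) E"
      by (rule emeasure_eq_AE) (use EB E s in auto)
    then show ?thesis using True by simp
  next
    case False
    have "E \<inter> X0 \<inter> p -` F \<subseteq> UNIV - {x\<in>X0. p x = y}" using False by auto
    then have "emeasure (\<gamma> y) (E \<inter> X0 \<inter> p -` F) \<le> 0"
      using emeasure_mono[OF _ fibB] z by metis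
    then show ?thesis using False by simp
  qed
qed

lemma disint_unique:
  fixes \<gamma> \<gamma>' :: "'y::{t2_space,second_countable_topology} \<Rightarrow> 'x::second_countable_topology measure"
    and p :: "'x \<Rightarrow> 'y" and \<nu> :: "'y measure" and \<mu> :: "'x measure"
  assumes nus: "sets \<nu> = sets borel" and nusf: "sigma_finite_measure \<nu>"
    and nuz: "emeasure \<nu> (UNIV - Y0) = 0"
    and Y0: "closed Y0" and X0: "closed X0" and pc: "continuous_on UNIV p"
    and b: "bsm X0 Y0 p \<gamma>" and b': "bsm X0 Y0 p \<gamma>'" and lf: "bsm_locally_finite X0 Y0 \<gamma>"
    and d: "disintegration X0 \<gamma> \<mu> \<nu>" and d': "disintegration X0 \<gamma>' \<mu> \<nu>"
  shows "\<exists>N\<in>null_sets \<nu>. \<forall>y\<in>Y0 - N. \<gamma>' y = \<gamma> y"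
proof -
  have spc: "space \<nu> = UNIV" using sets_eq_imp_space_eq[OF nus] by simp
  have Y0B: "Y0 \<in> sets borel" using Y0 by auto
  have X0B: "X0 \<in> sets borel" using X0 by auto
  have AEY: "AE y in \<nu>. y \<in> Y0"
    by (rule AE_I'[where N="UNIV - Y0"]) (use nuz Y0B nus spc in auto)
  have pm: "p \<in> borel_measurable borel" by (rule borel_measurable_continuous_onI[OF pc])
  have step1: "AE y in \<nu>. y \<in> Y0 \<longrightarrow> emeasure (\<gamma> y) E = emeasure (\<gamma>' y) E"
    if E: "E \<in> sets borel" for E
  proof -
    define f where "f y = emeasure (\<gamma> y) E * indicator Y0 y" for y
    define f' where "f' y = emeasure (\<gamma>' y) E * indicator Y0 y" for y
    have "(\<lambda>y. emeasure (\<gamma> y) E) \<in> borel_measurable (restrict_space borel Y0)"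
      using b E unfolding bsm_def by auto
    then have "f \<in> borel_measurable borel" unfolding f_def
      using borel_measurable_restrict_space_iff_ennreal[of Y0 borel] Y0B by simp
    then have fm: "f \<in> borel_measurable \<nu>" by (subst measurable_cong_sets[OF nus refl]) assumption
    have "(\<lambda>y. emeasure (\<gamma>' y) E) \<in> borel_measurable (restrict_space borel Y0)"
      using b' E unfolding bsm_def by auto
    then have "f' \<in> borel_measurable borel" unfolding f'_def
      using borel_measurable_restrict_space_iff_ennreal[of Y0 borel] Y0B by simp
    then have fm': "f' \<in> borel_measurable \<nu>" by (subst measurable_cong_sets[OF nus refl]) assumption
    have "AE y in \<nu>. f y = f' y"
    proof (rule sigma_finite_measure.density_unique2[OF nusf fm fm'])
      fix A assume A: "A \<in> sets \<nu>"
      then have AB: "A \<in> sets borel" using nus by simp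
      have pA: "p -` A \<in> sets borel" using measurable_sets[OF pm AB] by simp
      have sub: "E \<inter> X0 \<inter> p -` A \<in> sets borel" "E \<inter> X0 \<inter> p -` A \<subseteq> X0"
        using E X0B pA by auto
      have "(\<integral>\<^sup>+ y \<in> A. f y \<partial>\<nu>) = (\<integral>\<^sup>+ y. emeasure (\<gamma> y) (E \<inter> X0 \<inter> p -` A) \<partial>\<nu>)"
        by (rule nn_integral_cong_AE) (use AEY in \<open>eventually_elim, auto simp: f_def fib_restrict[OF b _ X0 pc E AB]\<close>)
      also have "\<dots> = emeasure \<mu> (E \<inter> X0 \<inter> p -` A)" using d sub unfolding disintegration_def by simp
      also have "\<dots> = (\<integral>\<^sup>+ y. emeasure (\<gamma>' y) (E \<inter> X0 \<inter> p -` A) \<partial>\<nu>)" using d' sub unfolding disintegration_def by simp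
      also have "\<dots> = (\<integral>\<^sup>+ y \<in> A. f' y \<partial>\<nu>)"
        by (rule nn_integral_cong_AE) (use AEY in \<open>eventually_elim, auto simp: f'_def fib_restrict[OF b' _ X0 pc E AB]\<close>)
      finally show "(\<integral>\<^sup>+ y \<in> A. f y \<partial>\<nu>) = (\<integral>\<^sup>+ y \<in> A. f' y \<partial>\<nu>)" .
    qed
    then show ?thesis by eventually_elim (auto simp: f_def f'_def)
  qed
  obtain B :: "'x set set" where B: "countable B" "topological_basis B"
    using ex_countable_basis by blast
  let ?U = "{U. open U \<and> (\<forall>y\<in>Y0. emeasure (\<gamma> y) U < \<infinity>)}"
  obtain U' where U': "U' \<subseteq> ?U" "countable U'" "\<Union>U' = \<Union>?U"
    using Lindelof[of ?U] by auto
  have X0U: "X0 \<subseteq> \<Union>?U" using lf unfolding bsm_locally_finite_def by blast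
  define A where "A = insert (- X0) U'"
  define C where "C = (\<lambda>xs. \<Inter>(set xs)) ` lists (B \<union> A)"
  have Aopen: "\<forall>a\<in>A. open a" using U'(1) X0 unfolding A_def by auto
  have BAopen: "\<forall>a\<in>B \<union> A. open a" using Aopen topological_basis_open[OF B(2)] by auto
  have cA: "countable A" using U'(2) unfolding A_def by simp
  have cC: "countable C" unfolding C_def using B(1) cA by simp
  have Copen: "open c" if "c \<in> C" for c
  proof -
    from that obtain xs where xs: "xs \<in> lists (B \<union> A)" "c = \<Inter>(set xs)"
      unfolding C_def by (rule imageE)
    have "set xs \<subseteq> B \<union> A" using xs(1) by (simp add: in_lists_conv_set subset_iff)
    then have "\<forall>T\<in>set xs. open T" using BAopen by blast
    then have "open (\<Inter>(set xs))" by (intro open_Inter finite_set)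
    then show ?thesis using xs(2) by simp
  qed
  have CB: "C \<subseteq> sets borel" using Copen by auto
  have AC: "A \<subseteq> C" unfolding C_def
  proof
    fix a assume "a \<in> A" then show "a \<in> (\<lambda>xs. \<Inter>(set xs)) ` lists (B \<union> A)"
      by (intro image_eqI[where x="[a]"]) auto
  qed
  have BC: "B \<subseteq> C" unfolding C_def
  proof
    fix a assume "a \<in> B" then show "a \<in> (\<lambda>xs. \<Inter>(set xs)) ` lists (B \<union> A)"
      by (intro image_eqI[where x="[a]"]) auto
  qed
  have IC: "Int_stable C" unfolding Int_stable_def
  proof (intro ballI)
    fix a b assume a: "a \<in> C" and b: "b \<in> C"
    from a obtain xs where xs: "xs \<in> lists (B \<union> A)" "a = \<Inter>(set xs)"
      unfolding C_def by (rule imageE)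
    from b obtain ys where ys: "ys \<in> lists (B \<union> A)" "b = \<Inter>(set ys)"
      unfolding C_def by (rule imageE)
    have "xs @ ys \<in> lists (B \<union> A)" using xs ys by simp
    moreover have "a \<inter> b = \<Inter>(set (xs @ ys))" using xs ys by auto
    ultimately show "a \<inter> b \<in> C" unfolding C_def by blast
  qed
  have sC: "sets borel = sigma_sets UNIV C"
  proof
    have "sets (sigma UNIV B) = sigma_sets UNIV B" by (rule sets_measure_of) simp
    then have "sets borel = sigma_sets UNIV B"
      using borel_eq_countable_basis[OF B] by simp
    also have "\<dots> \<subseteq> sigma_sets UNIV C" by (rule sigma_sets_mono'[OF BC])
    finally show "sets borel \<subseteq> sigma_sets UNIV C" .
    have "sigma_sets UNIV C \<subseteq> sigma_sets UNIV (sets borel)" by (rule sigma_sets_mono'[OF CB])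
    also have "\<dots> = sets borel" using sets.sigma_sets_eq[of borel] by simp
    finally show "sigma_sets UNIV C \<subseteq> sets borel" .
  qed
  have "AE y in \<nu>. \<forall>E\<in>C. y \<in> Y0 \<longrightarrow> emeasure (\<gamma> y) E = emeasure (\<gamma>' y) E"
  proof (subst AE_ball_countable[OF cC])
    show "\<forall>E\<in>C. AE y in \<nu>. y \<in> Y0 \<longrightarrow> emeasure (\<gamma> y) E = emeasure (\<gamma>' y) E"
      using step1 CB by blast
  qed
  then obtain N where N: "{y \<in> space \<nu>. \<not> (\<forall>E\<in>C. y \<in> Y0 \<longrightarrow> emeasure (\<gamma> y) E = emeasure (\<gamma>' y) E)} \<subseteq> N"
    "emeasure \<nu> N = 0" "N \<in> sets \<nu>" by (rule AE_E)
  show ?thesis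
  proof (intro bexI ballI)
    show "N \<in> null_sets \<nu>" using N by auto
    fix y assume y: "y \<in> Y0 - N"
    have sy: "sets (\<gamma> y) = sets borel" and z: "emeasure (\<gamma> y) (UNIV - {x\<in>X0. p x = y}) = 0"
      using b y unfolding bsm_def by auto
    have sy': "sets (\<gamma>' y) = sets borel" using b' y unfolding bsm_def by auto
    have fibeq: "{x\<in>X0. p x = y} = X0 \<inter> p -` {y}" by auto
    have "closed (X0 \<inter> p -` {y})" by (intro closed_Int X0 closed_vimage pc closed_singleton)
    then have fibB: "UNIV - {x\<in>X0. p x = y} \<in> sets (\<gamma> y)" unfolding sy fibeq by auto
    have "\<gamma> y = \<gamma>' y"
    proof (rule measure_eqI_generator_eq_countable[OF IC _ _ _ _ AC _ cA])
      show "C \<subseteq> Pow UNIV" by simp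
      show "emeasure (\<gamma> y) X = emeasure (\<gamma>' y) X" if "X \<in> C" for X
        using N(1) y that spc by blast
      show "sets (\<gamma> y) = sigma_sets UNIV C" using sy sC by simp
      show "sets (\<gamma>' y) = sigma_sets UNIV C" using sy' sC by simp
      have "X0 \<subseteq> \<Union>U'" using X0U U'(3) by simp
      then show "\<Union>A = UNIV" unfolding A_def by auto
      show "emeasure (\<gamma> y) a \<noteq> \<infinity>" if "a \<in> A" for a
      proof (cases "a = - X0")
        case True
        have "- X0 \<subseteq> UNIV - {x\<in>X0. p x = y}" by auto
        then have "emeasure (\<gamma> y) (- X0) \<le> 0" using emeasure_mono[OF _ fibB] z by metis
        then show ?thesis using True by auto
      next
        case False
        then have "a \<in> U'" using that unfolding A_def by auto
        then have "emeasure (\<gamma> y) a < \<infinity>" using U'(1) y by blast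
        then show ?thesis by simp
      qed
    qed
    then show "\<gamma>' y = \<gamma> y" by simp
  qed
qed

lemma induced_sets: "sets (induced_measure lam mu0) = sets borel"
proof -
  have "sets (induced_measure lam mu0) = sigma_sets UNIV (sets borel)"
    unfolding induced_measure_def by (rule sets_measure_of) simp
  also have "\<dots> = sets borel" using sets.sigma_sets_eq[of borel] by simp
  finally show ?thesis .
qed

lemma induced_le: "emeasure (induced_measure lam mu0) E \<le> (\<integral>\<^sup>+ u. emeasure (lam u) E \<partial>mu0)"
  unfolding induced_measure_def by (auto simp: emeasure_measure_of_conv)

lemma induced_r_null:
  fixes r :: "'g::{t2_space,second_countable_topology} \<Rightarrow> 'g"
  assumes hs: "haar_system r d m lam" and qi: "quasi_invariant r i lam mu0"
    and rc: "continuous_on UNIV r" and cl: "closed (gunits r)"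
    and N: "N \<in> null_sets mu0"
  shows "emeasure (induced_measure lam mu0) (r -` N) = 0"
proof -
  have s0: "sets mu0 = sets borel" and z0: "emeasure mu0 (UNIV - gunits r) = 0"
    using qi unfolding quasi_invariant_def by auto
  have spc: "space mu0 = UNIV" using sets_eq_imp_space_eq[OF s0] by simp
  have gB: "UNIV - gunits r \<in> sets mu0" using cl s0 by auto
  have AEg: "AE u in mu0. u \<in> gunits r"
    by (rule AE_I'[where N="UNIV - gunits r"]) (use z0 gB spc in auto)
  have AEN: "AE u in mu0. u \<notin> N" by (rule AE_not_in[OF N])
  have "(\<integral>\<^sup>+ u. emeasure (lam u) (r -` N) \<partial>mu0) = (\<integral>\<^sup>+ u. 0 \<partial>mu0)"
  proof (rule nn_integral_cong_AE)
    show "AE u in mu0. emeasure (lam u) (r -` N) = 0"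
      using AEg AEN
    proof eventually_elim
      case (elim u)
      have su: "sets (lam u) = sets borel" and zu: "emeasure (lam u) (UNIV - r -` {u}) = 0"
        using hs elim(1) unfolding haar_system_def by auto
      have "closed (r -` {u})" by (intro closed_vimage rc closed_singleton)
      then have cB: "UNIV - r -` {u} \<in> sets (lam u)" unfolding su by auto
      have "r -` N \<subseteq> UNIV - r -` {u}" using elim(2) by auto
      then have "emeasure (lam u) (r -` N) \<le> 0" using emeasure_mono[OF _ cB] zu by metis
      then show ?case by simp
    qed
  qed
  then have "(\<integral>\<^sup>+ u. emeasure (lam u) (r -` N) \<partial>mu0) = 0" by simp
  then show ?thesis using induced_le[of lam mu0 "r -` N"] by simp
qed

theorem proposition5p7:
  fixes rS dS :: "'s::{t2_space,second_countable_topology} \<Rightarrow> 's" and mS :: "'s \<Rightarrow> 's \<Rightarrow> 's"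
    and iS :: "'s \<Rightarrow> 's" and lamS :: "'s \<Rightarrow> 's measure" and muS0 :: "'s measure"
    and rG dG :: "'g::{t2_space,second_countable_topology} \<Rightarrow> 'g" and mG :: "'g \<Rightarrow> 'g \<Rightarrow> 'g"
    and iG :: "'g \<Rightarrow> 'g" and lamG :: "'g \<Rightarrow> 'g measure" and muG0 :: "'g measure"
    and rT dT :: "'t::{t2_space,second_countable_topology} \<Rightarrow> 't" and mT :: "'t \<Rightarrow> 't \<Rightarrow> 't"
    and iT :: "'t \<Rightarrow> 't" and lamT :: "'t \<Rightarrow> 't measure" and muT0 :: "'t measure"
    and p :: "'s \<Rightarrow> 'g" and q :: "'t \<Rightarrow> 'g"
    and \<gamma>p \<gamma>p' :: "'g \<Rightarrow> 's measure" and \<gamma>q \<gamma>q' :: "'g \<Rightarrow> 't measure"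
  assumes "haar_groupoid rS dS mS iS lamS muS0"
    and "haar_groupoid rG dG mG iG lamG muG0"
    and "haar_groupoid rT dT mT iT lamT muT0"
    and "haar_hom rS dS mS lamS muS0 rG dG mG lamG muG0 p"
    and "haar_hom rT dT mT lamT muT0 rG dG mG lamG muG0 q"
    and "admissible_bsm rS muS0 rG muG0 p \<gamma>p"
    and "admissible_bsm rT muT0 rG muG0 q \<gamma>q"
    and "admissible_bsm rS muS0 rG muG0 p \<gamma>p'"
    and "admissible_bsm rT muT0 rG muG0 q \<gamma>q'"
  shows "\<forall>B\<in>sets borel. B \<subseteq> P0 rS rG dG rT p q \<longrightarrow>
           muP0 rG dG lamG muG0 \<gamma>p' \<gamma>q' B = muP0 rG dG lamG muG0 \<gamma>p \<gamma>q B"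
proof -
  note hG = assms(2)[unfolded haar_groupoid_def topological_groupoid_def]
  have grG: "groupoid rG dG mG iG" and lcG: "locally_compact_space (euclidean :: 'g topology)"
    and rGc: "continuous_on UNIV rG" and dGc: "continuous_on UNIV dG"
    and hsG: "haar_system rG dG mG lamG" and qiG: "quasi_invariant rG iG lamG muG0"
    using hG by auto
  have clG: "closed (gunits rG)" by (rule gunits_closed[OF grG rGc])
  have clS: "closed (gunits rS)"
    using assms(1) gunits_closed unfolding haar_groupoid_def topological_groupoid_def by blast
  have clT: "closed (gunits rT)"
    using assms(3) gunits_closed unfolding haar_groupoid_def topological_groupoid_def by blast
  have pc: "continuous_on UNIV p" using assms(4) unfolding haar_hom_def by blast
  have qc: "continuous_on UNIV q" using assms(5) unfolding haar_hom_def by blast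
  have s0: "sets muG0 = sets borel" and z0: "emeasure muG0 (UNIV - gunits rG) = 0"
    and fin0: "\<forall>K. compact K \<longrightarrow> emeasure muG0 K < \<infinity>"
    using qiG unfolding quasi_invariant_def by auto
  have sf: "sigma_finite_measure muG0" by (rule sigma_finite_lc[OF lcG s0 fin0])
  obtain N1 where N1: "N1 \<in> null_sets muG0" "\<forall>y\<in>gunits rG - N1. \<gamma>p' y = \<gamma>p y"
    using disint_unique[OF s0 sf z0 clG clS pc, of \<gamma>p \<gamma>p' muS0] assms(6,8)
    unfolding admissible_bsm_def by blast
  obtain N2 where N2: "N2 \<in> null_sets muG0" "\<forall>y\<in>gunits rG - N2. \<gamma>q' y = \<gamma>q y"
    using disint_unique[OF s0 sf z0 clG clT qc, of \<gamma>q \<gamma>q' muT0] assms(7,9)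
    unfolding admissible_bsm_def by blast
  let ?M = "induced_measure lamG muG0"
  have rGm: "rG \<in> borel_measurable borel" by (rule borel_measurable_continuous_onI[OF rGc])
  have N1B: "N1 \<in> sets borel" "N2 \<in> sets borel" using N1(1) N2(1) s0 by auto
  have rN1B: "rG -` N1 \<in> sets borel" using measurable_sets[OF rGm N1B(1)] by simp
  have rN2B: "rG -` N2 \<in> sets borel" using measurable_sets[OF rGm N1B(2)] by simp
  have e1: "emeasure ?M (rG -` N1) = 0" by (rule induced_r_null[OF hsG qiG rGc clG N1(1)])
  have e2': "emeasure ?M (rG -` N2) = 0" by (rule induced_r_null[OF hsG qiG rGc clG N2(1)])
  have dv: "dG -` N2 = iG -` (rG -` N2)" using grG unfolding groupoid_def by auto
  have e2: "emeasure ?M (dG -` N2) = 0"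
    using qiG rN2B e2' unfolding quasi_invariant_def dv by blast
  have dGm: "dG \<in> borel_measurable borel" by (rule borel_measurable_continuous_onI[OF dGc])
  have dN2B: "dG -` N2 \<in> sets borel" using measurable_sets[OF dGm N1B(2)] by simp
  have nn1: "rG -` N1 \<in> null_sets ?M" using e1 rN1B induced_sets by auto
  have nn2: "dG -` N2 \<in> null_sets ?M" using e2 dN2B induced_sets by auto
  have AE: "AE x in ?M. eta rG dG \<gamma>p' \<gamma>q' x = eta rG dG \<gamma>p \<gamma>q x"
    using AE_not_in[OF nn1] AE_not_in[OF nn2]
  proof eventually_elim
    case (elim x)
    have "rG x \<in> gunits rG" unfolding gunits_def by simp
    moreover have "dG x \<in> gunits rG" using grG unfolding gunits_def groupoid_def
      by (metis rangeI)
    ultimately show ?case using elim N1(2) N2(2) unfolding eta_def by auto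
  qed
  show ?thesis unfolding muP0_def
    by (intro ballI impI nn_integral_cong_AE) (use AE in \<open>eventually_elim, simp\<close>)
qed

end
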